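(* Fix a maturity $t$ and an underlying security. For each strike $K\ge 0$ let $C(K)$ and $P(K)$ denote the prices of the European call and put of strike $K$ and maturity $t$, and let $F$ be the tradable forward price for delivery at $t$. Assume put-call parity holds for every strike: $C(K)-P(K)+K=F$ for all $K\ge 0$. Assume calls and puts are valued by expectation of terminal payoff, i.e. there exist Borel probability measures $\mu_1,\mu_2$ on $\Omega=[0,\infty)$ with finite first moment such that $C(K)=\int_\Omega (S-K)^+\,\mathrm{d}\mu_1(S)$ and $P(K)=\int_\Omega (K-S)^+\,\mathrm{d}\mu_2(S)$ for all $K\ge 0$. Then there is a unique Borel probability measure $\mu_Q$ on $\Omega$ that prices both all European calls and all European puts of maturity $t$ by expectation of terminal payoff, i.e. $C(K)=\int_\Omega (S-K)^+\,\mathrm{d}\mu_Q(S)$ and $P(K)=\int_\Omega (K-S)^+\,\mathrm{d}\mu_Q(S)$ for every $K\ge 0$.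
   Context: $\Omega=[0,\infty)$ is the set of possible values $S=S_t$ of the underlying at maturity $t$. Option prices and the forward price are expressed in units payable at maturity (undiscounted), so that put-call parity reads $C(K)-P(K)+K=F$. The forward is assumed to exist and be tradable; it may be the arbitrage (risk-neutral) forward $S_0e^{(r-\delta)(t-t_0)}$ or any other tradable forward price. *)

theory Defs
  imports "HOL-Probability.Probability"
begin

definition borel_prob_Omega :: "real measure \<Rightarrow> bool" where
  "borel_prob_Omega M \<longleftrightarrow> sets M = sets (restrict_space borel {0..}) \<and> prob_space M"

definition finite_first_moment :: "real measure \<Rightarrow> bool" where
  "finite_first_moment M \<longleftrightarrow> integrable M (\<lambda>S. S)"

definition prices_calls :: "real measure \<Rightarrow> (real \<Rightarrow> real) \<Rightarrow> bool" where
  "prices_calls M C \<longleftrightarrow> (\<forall>K\<ge>0. has_bochner_integral M (\<lambda>S. max (S - K) 0) (C K))"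

definition prices_puts :: "real measure \<Rightarrow> (real \<Rightarrow> real) \<Rightarrow> bool" where
  "prices_puts M P \<longleftrightarrow> (\<forall>K\<ge>0. has_bochner_integral M (\<lambda>S. max (K - S) 0) (P K))"

end

theory Submission
  imports Defs
begin

lemma bpo_space: "borel_prob_Omega M \<Longrightarrow> space M = {0..}"
  unfolding borel_prob_Omega_def
  by (metis space_restrict_space2 sets_eq_imp_space_eq sets.sets_into_space
        atLeast_borel space_borel Int_UNIV_left inf.absorb_iff2 space_restrict_space)

lemma bpo_meas: "borel_prob_Omega M \<Longrightarrow> (f::real\<Rightarrow>real) \<in> borel_measurable borel \<Longrightarrow> f \<in> borel_measurable M"
  unfolding borel_prob_Omega_def
  using measurable_cong_sets[of M "restrict_space borel {0..}" borel borel]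
  by (metis measurable_restrict_space1)

lemma bpo_sets: "borel_prob_Omega M \<Longrightarrow> (K::real) \<ge> 0 \<Longrightarrow> {0..K} \<in> sets M"
  unfolding borel_prob_Omega_def
  by (simp add: sets_restrict_space_iff)

lemma maxdiff:
  fixes K h x :: real
  assumes "0 < h"
  shows "0 \<le> max (K + h - x) 0 - max (K - x) 0 \<and> max (K + h - x) 0 - max (K - x) 0 \<le> h"
  using assms by (simp add: max_def)

lemma put_lim:
  assumes M: "borel_prob_Omega M" and P: "prices_puts M P" and K: "(K::real) \<ge> 0"
  shows "(\<lambda>n. (real n + 1) * (P (K + 1 / (real n + 1)) - P K)) \<longlonglongrightarrow> measure M {0..K}"
proof -
  interpret prob_space M using M unfolding borel_prob_Omega_def by simp
  have sp: "space M = {0..}" by (rule bpo_space[OF M])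
  define s where "s n x = (real n + 1) * (max (K + 1 / (real n + 1) - x) 0 - max (K - x) 0)" for n x
  have hb: "has_bochner_integral M (\<lambda>x. max (K' - x) 0) (P K')" if "K' \<ge> 0" for K'
    using P that unfolding prices_puts_def by auto
  have int_s: "integral\<^sup>L M (s n) = (real n + 1) * (P (K + 1 / (real n + 1)) - P K)" for n
  proof -
    have "has_bochner_integral M (s n) ((real n + 1) * (P (K + 1 / (real n + 1)) - P K))"
      unfolding s_def
      by (intro has_bochner_integral_mult_right has_bochner_integral_diff hb) (use K in auto)
    then show ?thesis by (simp add: has_bochner_integral_integral_eq)
  qed
  have "(\<lambda>n. integral\<^sup>L M (s n)) \<longlonglongrightarrow> integral\<^sup>L M (indicator {0..K} :: real \<Rightarrow> real)"
  proof (rule integral_dominated_convergence[where w="\<lambda>_. 1"])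
    show "(indicator {0..K} :: real \<Rightarrow> real) \<in> borel_measurable M"
      using bpo_sets[OF M K] by measurable
    show "s n \<in> borel_measurable M" for n
      by (rule bpo_meas[OF M]) (unfold s_def, measurable)
    show "integrable M (\<lambda>_. 1::real)" by simp
    show "AE x in M. norm (s n x) \<le> 1" for n
    proof (rule AE_I2)
      fix x
      have h: "0 < 1 / (real n + 1)" by simp
      define d where "d = max (K + 1 / (real n + 1) - x) 0 - max (K - x) 0"
      have d: "0 \<le> d" "d \<le> 1 / (real n + 1)"
        using maxdiff[OF h, of K x] unfolding d_def by auto
      have sd: "s n x = (real n + 1) * d" unfolding s_def d_def by simp
      have "(real n + 1) * d \<le> (real n + 1) * (1 / (real n + 1))"
        by (rule mult_left_mono[OF d(2)]) simp
      then have "0 \<le> s n x" "s n x \<le> 1" using d(1) sd by auto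
      then show "norm (s n x) \<le> 1" by simp
    qed
    show "AE x in M. (\<lambda>n. s n x) \<longlonglongrightarrow> indicator {0..K} x"
    proof (rule AE_I2)
      fix x assume "x \<in> space M"
      then have x0: "x \<ge> 0" using sp by auto
      show "(\<lambda>n. s n x) \<longlonglongrightarrow> indicator {0..K} x"
      proof (cases "x \<le> K")
        case True
        have "s n x = 1" for n
        proof -
          have h: "0 < 1 / (real n + 1)" by simp
          have "max (K + 1 / (real n + 1) - x) 0 = K + 1 / (real n + 1) - x"
            using True h by linarith
          moreover have "max (K - x) 0 = K - x" using True by linarith
          ultimately show ?thesis unfolding s_def by simp
        qed
        then show ?thesis using True x0 by (simp add: indicator_def)
      next
        case False
        obtain N :: nat where N: "1 / (x - K) < real N" using reals_Archimedean2 by blast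
        have "s n x = 0" if "n \<ge> N" for n
        proof -
          have "1 / (x - K) < real n + 1" using N that by linarith
          then have "1 < (real n + 1) * (x - K)" using False by (simp add: field_simps)
          then have "1 / (real n + 1) < x - K" by (simp add: field_simps)
          then show ?thesis using False unfolding s_def by simp
        qed
        then have "eventually (\<lambda>n. s n x = 0) sequentially"
          unfolding eventually_sequentially by blast
        then have "(\<lambda>n. s n x) \<longlonglongrightarrow> 0" by (rule tendsto_eventually)
        then show ?thesis using False by (simp add: indicator_def)
      qed
    qed
  qed
  moreover have "integral\<^sup>L M (indicator {0..K} :: real \<Rightarrow> real) = measure M {0..K}"
    using bpo_sets[OF M K] by simp
  ultimately show ?thesis by (simp add: int_s)
qed

lemma put_unique:
  assumes M: "borel_prob_Omega M" and PM: "prices_puts M P"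
    and N: "borel_prob_Omega N" and PN: "prices_puts N P"
  shows "M = N"
proof -
  have eqK: "measure M {0..K} = measure N {0..K}" if "K \<ge> 0" for K
    using LIMSEQ_unique[OF put_lim[OF M PM that] put_lim[OF N PN that]] .
  define M' where "M' = distr M borel (\<lambda>x::real. x)"
  define N' where "N' = distr N borel (\<lambda>x::real. x)"
  have idM: "(\<lambda>x::real. x) \<in> measurable M borel"
    using bpo_meas[OF M, of "\<lambda>x. x"] by simp
  have idN: "(\<lambda>x::real. x) \<in> measurable N borel"
    using bpo_meas[OF N, of "\<lambda>x. x"] by simp
  interpret pM: prob_space M using M unfolding borel_prob_Omega_def by simp
  interpret pN: prob_space N using N unfolding borel_prob_Omega_def by simp
  have rM: "real_distribution M'"
    unfolding M'_def real_distribution_def real_distribution_axioms_def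
    using pM.prob_space_distr[OF idM] by simp
  have rN: "real_distribution N'"
    unfolding N'_def real_distribution_def real_distribution_axioms_def
    using pN.prob_space_distr[OF idN] by simp
  have cdfM: "cdf M' x = (if x < 0 then 0 else measure M {0..x})" for x
  proof -
    have "cdf M' x = measure M ({..x} \<inter> space M)"
      unfolding cdf_def M'_def using measure_distr[OF idM, of "{..x}"]
      by (simp add: vimage_def Int_def)
    moreover have "x < 0 \<Longrightarrow> {..x} \<inter> space M = {}"
      unfolding bpo_space[OF M] by auto
    moreover have "\<not> x < 0 \<Longrightarrow> {..x} \<inter> space M = {0..x}"
      unfolding bpo_space[OF M] by auto
    ultimately show ?thesis by simp
  qed
  have cdfN: "cdf N' x = (if x < 0 then 0 else measure N {0..x})" for x
  proof -
    have "cdf N' x = measure N ({..x} \<inter> space N)"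
      unfolding cdf_def N'_def using measure_distr[OF idN, of "{..x}"]
      by (simp add: vimage_def Int_def)
    moreover have "x < 0 \<Longrightarrow> {..x} \<inter> space N = {}"
      unfolding bpo_space[OF N] by auto
    moreover have "\<not> x < 0 \<Longrightarrow> {..x} \<inter> space N = {0..x}"
      unfolding bpo_space[OF N] by auto
    ultimately show ?thesis by simp
  qed
  have "cdf M' = cdf N'"
    by (rule ext) (simp add: cdfM cdfN eqK)
  then have MN': "M' = N'" using cdf_unique[OF rM rN] by simp
  have setsMN: "sets M = sets N" using M N unfolding borel_prob_Omega_def by simp
  show ?thesis
  proof (rule measure_eqI[OF setsMN])
    fix A assume A: "A \<in> sets M"
    have Ab: "A \<in> sets borel" using A M unfolding borel_prob_Omega_def
      by (simp add: sets_restrict_space_iff)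
    have AM: "A \<subseteq> space M" using A by (rule sets.sets_into_space)
    have AN: "A \<subseteq> space N" using AM unfolding bpo_space[OF M] bpo_space[OF N] .
    have "emeasure M A = emeasure M' A"
      unfolding M'_def emeasure_distr[OF idM Ab] using AM
      by (metis Int_absorb2 vimage_ident)
    also have "\<dots> = emeasure N' A" by (simp add: MN')
    also have "\<dots> = emeasure N A"
      unfolding N'_def emeasure_distr[OF idN Ab] using AN
      by (metis Int_absorb2 vimage_ident)
    finally show "emeasure M A = emeasure N A" .
  qed
qed

theorem theorem1:
  fixes C P :: "real \<Rightarrow> real" and F :: real and \<mu>1 \<mu>2 :: "real measure"
  assumes parity: "\<forall>K\<ge>0. C K - P K + K = F"
    and m1: "borel_prob_Omega \<mu>1" and fm1: "finite_first_moment \<mu>1"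
    and m2: "borel_prob_Omega \<mu>2" and fm2: "finite_first_moment \<mu>2"
    and calls: "prices_calls \<mu>1 C"
    and puts: "prices_puts \<mu>2 P"
  shows "\<exists>!\<mu>Q. borel_prob_Omega \<mu>Q \<and> prices_calls \<mu>Q C \<and> prices_puts \<mu>Q P"
proof -
  interpret p1: prob_space \<mu>1 using m1 unfolding borel_prob_Omega_def by simp
  have sp1: "space \<mu>1 = {0..}" by (rule bpo_space[OF m1])
  have sp2: "space \<mu>2 = {0..}" by (rule bpo_space[OF m2])
  have intS: "integrable \<mu>1 (\<lambda>S. S)" using fm1 unfolding finite_first_moment_def .
  have c0: "has_bochner_integral \<mu>1 (\<lambda>S. max (S - 0) 0) (C 0)"
    using calls unfolding prices_calls_def by auto
  have "has_bochner_integral \<mu>1 (\<lambda>S. S) (C 0)"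
  proof -
    have "x \<in> space \<mu>1 \<Longrightarrow> max (x - 0) 0 = x" for x unfolding sp1 by auto
    then show ?thesis using c0 has_bochner_integral_cong[of \<mu>1 \<mu>1 "\<lambda>S. max (S - 0) 0" "\<lambda>S. S" "C 0" "C 0"] by blast
  qed
  then have C0: "C 0 = integral\<^sup>L \<mu>1 (\<lambda>S. S)" by (simp add: has_bochner_integral_integral_eq)
  have p0: "has_bochner_integral \<mu>2 (\<lambda>S. max (0 - S) 0) (P 0)"
    using puts unfolding prices_puts_def by auto
  have "has_bochner_integral \<mu>2 (\<lambda>S. 0) (P 0)"
  proof -
    have "x \<in> space \<mu>2 \<Longrightarrow> max (0 - x) 0 = 0" for x unfolding sp2 by auto
    then show ?thesis using p0 has_bochner_integral_cong[of \<mu>2 \<mu>2 "\<lambda>S. max (0 - S) 0" "\<lambda>S. 0" "P 0" "P 0"] by blast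
  qed
  then have P0: "P 0 = 0" using has_bochner_integral_zero has_bochner_integral_eq by blast
  have FE: "F = integral\<^sup>L \<mu>1 (\<lambda>S. S)" using parity C0 P0 by force
  have puts1: "prices_puts \<mu>1 P"
    unfolding prices_puts_def
  proof (intro allI impI)
    fix K :: real assume K: "K \<ge> 0"
    have cK: "has_bochner_integral \<mu>1 (\<lambda>S. max (S - K) 0) (C K)"
      using calls K unfolding prices_calls_def by auto
    have "has_bochner_integral \<mu>1 (\<lambda>S. max (S - K) 0 - S + K) (C K - integral\<^sup>L \<mu>1 (\<lambda>S. S) + K)"
      by (intro has_bochner_integral_add has_bochner_integral_diff cK has_bochner_integral_integrable intS)
         (use has_bochner_integral_integrable[of \<mu>1 "\<lambda>x. K"] in \<open>simp add: p1.prob_space\<close>)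
    moreover have "C K - integral\<^sup>L \<mu>1 (\<lambda>S. S) + K = P K" using parity K FE by force
    moreover have "(\<lambda>S. max (S - K) 0 - S + K) = (\<lambda>S. max (K - S) 0)" by (auto simp: max_def)
    ultimately show "has_bochner_integral \<mu>1 (\<lambda>S. max (K - S) 0) (P K)" by simp
  qed
  show ?thesis
  proof (rule ex1I[where a=\<mu>1])
    show "borel_prob_Omega \<mu>1 \<and> prices_calls \<mu>1 C \<and> prices_puts \<mu>1 P"
      using m1 calls puts1 by simp
  next
    fix \<mu> assume "borel_prob_Omega \<mu> \<and> prices_calls \<mu> C \<and> prices_puts \<mu> P"
    then show "\<mu> = \<mu>1" using put_unique[OF _ _ m1 puts1] by blast
  qed
qed

end
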